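(* For every real $t>\frac32$ there exist unique $t_1>1$ and $t_2\in\mathbb R$ such that $$t^2-tt_1+t_1^2-(t_2-1)^2=0,\qquad 2tt_1-t-t_1+1-2t_2=0.$$ For such $t,t_1,t_2$ one has $t_2>t_1$. *)

theory Defs
  imports Complex_Main
begin

end

theory Submission
  imports Defs
begin

lemma eqv:
  fixes t u v :: real
  shows "(t^2 - t * u + u^2 - (v - 1)^2 = 0 \<and> 2 * t * u - t - u + 1 - 2 * v = 0) \<longleftrightarrow>
     (v = (2 * t * u - t - u + 1) / 2 \<and>
      ((2*t-3)*(2*t+1)) * u^2 + (-2*(2*t+1)*(t-1)) * u + (1-t)*(3*t+1) = 0)"
proof -
  have "(t^2 - t * u + u^2 - (v - 1)^2 = 0 \<and> 2 * t * u - t - u + 1 - 2 * v = 0) \<longleftrightarrow>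
     (v = (2 * t * u - t - u + 1) / 2 \<and> t^2 - t * u + u^2 - (v - 1)^2 = 0)" by auto
  also have "\<dots> \<longleftrightarrow> (v = (2 * t * u - t - u + 1) / 2 \<and>
      ((2*t-3)*(2*t+1)) * u^2 + (-2*(2*t+1)*(t-1)) * u + (1-t)*(3*t+1) = 0)"
  proof (cases "v = (2 * t * u - t - u + 1) / 2")
    case True
    have idt: "t^2 - t * u + u^2 - (v - 1)^2 =
      - (((2*t-3)*(2*t+1)) * u^2 + (-2*(2*t+1)*(t-1)) * u + (1-t)*(3*t+1)) / 4"
      unfolding True by (simp add: power2_eq_square field_simps)
    have "(t^2 - t * u + u^2 - (v - 1)^2 = 0) \<longleftrightarrow> (((2*t-3)*(2*t+1)) * u^2 + (-2*(2*t+1)*(t-1)) * u + (1-t)*(3*t+1) = 0)"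
    proof -
      have gen: "\<And>x y::real. x = -y/4 \<Longrightarrow> (x=0) = (y=0)" by auto
      show ?thesis by (rule gen[OF idt])
    qed
    then show ?thesis using True by blast
  qed simp
  finally show ?thesis .
qed

theorem lemma4p5:
  fixes t :: real
  assumes "t > 3/2"
  shows "(\<exists>!p :: real \<times> real. fst p > 1 \<and>
            t^2 - t * fst p + (fst p)^2 - (snd p - 1)^2 = 0 \<and>
            2 * t * fst p - t - fst p + 1 - 2 * snd p = 0)
       \<and> (\<forall>t1 t2 :: real. t1 > 1 \<and>
            t^2 - t * t1 + t1^2 - (t2 - 1)^2 = 0 \<and>
            2 * t * t1 - t - t1 + 1 - 2 * t2 = 0 \<longrightarrow> t2 > t1)"
proof -
  define a where "a = (2*t-3)*(2*t+1)"
  define b where "b = -2*(2*t+1)*(t-1)"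
  define c where "c = (1-t)*(3*t+1)"
  have a0: "a > 0" unfolding a_def using assms by simp
  have c0: "c < 0" unfolding c_def using assms by (simp add: mult_neg_pos)
  have f1: "a + b + c < 0" unfolding a_def b_def c_def using assms
    by (simp add: algebra_simps)
  define D where "D = b^2 - 4*a*c"
  have D0: "D \<ge> 0" unfolding D_def using a0 c0
    by (smt (verit) mult_pos_neg zero_le_power2)
  define u where "u = (-b + sqrt D) / (2*a)"
  have sq: "sqrt D ^ 2 = D" using D0 by simp
  have fu: "a*u^2 + b*u + c = 0"
    unfolding u_def using a0 sq unfolding D_def
    by (simp add: field_simps power2_eq_square)
  have u1: "u > 1"
  proof -
    have "sqrt D > 2*a + b"
    proof (cases "2*a + b < 0")
      case True then show ?thesis using D0 by (smt (verit) real_sqrt_ge_zero)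
    next
      case False
      have dd: "D - (2*a+b)^2 = -4*a*(a+b+c)" by (simp add: D_def power2_eq_square algebra_simps)
      have "a*(a+b+c) < 0" using f1 a0 by (simp add: mult_pos_neg)
      then have "(2*a+b)^2 < D" using dd by linarith
      then have "sqrt ((2*a+b)^2) < sqrt D" by (simp only: real_sqrt_less_iff)
      then show ?thesis using False by simp
    qed
    then show ?thesis unfolding u_def using a0 by (simp add: field_simps)
  qed
  have uniq: "v = u" if "v > 1" "a*v^2 + b*v + c = 0" for v
  proof (rule ccontr)
    assume ne: "v \<noteq> u"
    have "(u - v) * (a*(u+v) + b) = 0" using fu that(2)
      by (simp add: power2_eq_square algebra_simps)
    then have s: "a*(u+v) + b = 0" using ne by simp
    then have bb: "b = -a*(u+v)" by linarith
    have "c = -a*u^2 - b*u" using fu by linarith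
    also have "\<dots> = a*u*v" unfolding bb by (simp add: power2_eq_square algebra_simps)
    finally have "c = a*u*v" .
    moreover have "a*u*v > 0" using a0 u1 that(1) by simp
    ultimately show False using c0 by simp
  qed
  have key: "\<And>t1 t2. (t1 > 1 \<and> t^2 - t * t1 + t1^2 - (t2 - 1)^2 = 0 \<and>
            2 * t * t1 - t - t1 + 1 - 2 * t2 = 0) \<longleftrightarrow>
            (t1 > 1 \<and> t2 = (2 * t * t1 - t - t1 + 1) / 2 \<and> a*t1^2 + b*t1 + c = 0)"
    using eqv unfolding a_def b_def c_def by blast
  show ?thesis
  proof
    show "\<exists>!p :: real \<times> real. fst p > 1 \<and>
            t^2 - t * fst p + (fst p)^2 - (snd p - 1)^2 = 0 \<and>
            2 * t * fst p - t - fst p + 1 - 2 * snd p = 0"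
    proof (rule ex1I[where a="(u, (2 * t * u - t - u + 1) / 2)"])
      show "fst (u, (2 * t * u - t - u + 1) / 2) > 1 \<and>
            t^2 - t * fst (u, (2 * t * u - t - u + 1) / 2) + (fst (u, (2 * t * u - t - u + 1) / 2))^2 - (snd (u, (2 * t * u - t - u + 1) / 2) - 1)^2 = 0 \<and>
            2 * t * fst (u, (2 * t * u - t - u + 1) / 2) - t - fst (u, (2 * t * u - t - u + 1) / 2) + 1 - 2 * snd (u, (2 * t * u - t - u + 1) / 2) = 0"
        using key[of u "(2 * t * u - t - u + 1) / 2"] u1 fu by simp
    next
      fix p :: "real \<times> real"
      assume "fst p > 1 \<and>
            t^2 - t * fst p + (fst p)^2 - (snd p - 1)^2 = 0 \<and>
            2 * t * fst p - t - fst p + 1 - 2 * snd p = 0"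
      then have "fst p > 1 \<and> snd p = (2 * t * fst p - t - fst p + 1) / 2 \<and> a*(fst p)^2 + b*(fst p) + c = 0"
        using key by blast
      then show "p = (u, (2 * t * u - t - u + 1) / 2)"
        using uniq by (metis prod.collapse)
    qed
  next
    show "\<forall>t1 t2 :: real. t1 > 1 \<and>
            t^2 - t * t1 + t1^2 - (t2 - 1)^2 = 0 \<and>
            2 * t * t1 - t - t1 + 1 - 2 * t2 = 0 \<longrightarrow> t2 > t1"
    proof (intro allI impI)
      fix t1 t2 :: real
      assume h: "t1 > 1 \<and>
            t^2 - t * t1 + t1^2 - (t2 - 1)^2 = 0 \<and>
            2 * t * t1 - t - t1 + 1 - 2 * t2 = 0"
      show "t2 > t1"
      proof (rule ccontr)
        assume "\<not> t2 > t1"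
        then have le: "t2 \<le> t1" by simp
        from h have e1: "(t2-1)^2 = t^2 - t*t1 + t1^2" and e2: "2*t2 = 2 * t * t1 - t - t1 + 1" and g: "t1 > 1" by auto
        have "(2*t-3)*t1 = 2*t2 - 2*t1 + t - 1" using e2 by (simp add: algebra_simps)
        then have m: "(2*t-3)*t1 \<le> t - 1" using le by linarith
        have "(t2-1)^2 - (t1-1)^2 > 0"
        proof -
          have eq: "(t2-1)^2 - (t1-1)^2 = t^2 - 1 - t1*(t-2)" using e1 by (simp add: power2_eq_square algebra_simps)
          show ?thesis
          proof (cases "t \<le> 2")
            case True then have "t1*(t-2) \<le> 0" using g by (simp add: mult_nonneg_nonpos)
            moreover have "1 < t^2" using assms by (intro one_less_power) auto
            ultimately show ?thesis using eq by linarith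
          next
            case False
            have p: "2*t - 3 > 0" using assms by simp
            have "t1 \<le> (t-1)/(2*t-3)" using m p by (simp add: field_simps)
            then have "t1*(t-2) \<le> (t-1)/(2*t-3)*(t-2)" using False by (intro mult_right_mono) simp_all
            also have "\<dots> < t^2 - 1"
            proof -
              have i1: "(t^2-1)*(2*t-3) - (t-1)*(t-2) = (t-1)*(2*t*(t-1)-1)" by (simp add: power2_eq_square algebra_simps)
              have "t*(t-1) > 2*1" using False by (intro mult_strict_mono) auto
              then have "(t-1)*(2*t*(t-1)-1) > 0" using False by (intro mult_pos_pos) auto
              then have "(t-1)*(t-2) < (t^2-1)*(2*t-3)" using i1 by linarith
              then show ?thesis using p by (simp add: pos_divide_less_eq)
            qed
            finally show ?thesis using eq by simp
          qed
        qed
        then have "(t1-1)^2 < (t2-1)^2" by simp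
        then have "\<bar>t2-1\<bar> > \<bar>t1-1\<bar>" by (meson abs_le_square_iff not_le)
        then have "t2 < 2 - t1" using le g by linarith
        then have "(2*t+1)*t1 < t + 3" using e2 by (simp add: algebra_simps)
        moreover have "2*t+1 < (2*t+1)*t1" using mult_strict_left_mono[of 1 t1 "2*t+1"] g assms by simp
        ultimately have t2l: "t < 2" by linarith
        have neg: "t2 - 1 < 0" using \<open>t2 < 2 - t1\<close> g by linarith
        have lo1: "2*(t2 - 1) = (2*t-1)*(t1-1) + (t - 2)" using e2 by (simp add: algebra_simps)
        have "(2*t-1)*(t1-1) > 0" using g assms by (intro mult_pos_pos) auto
        then have lo: "2*(t2 - 1) > t - 2" using lo1 by linarith
        have "\<bar>t2-1\<bar> < \<bar>(2-t)/2\<bar>" using neg lo t2l by (simp add: abs_if)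
        then have "(t2-1)^2 < ((2-t)/2)^2" by (meson abs_le_square_iff not_le)
        moreover have "(t2-1)^2 \<ge> 3*t^2/4"
        proof -
          have "(t2-1)^2 = (t1 - t/2)^2 + 3*t^2/4" using e1 by (simp add: power2_eq_square algebra_simps)
          then show ?thesis by simp
        qed
        moreover have "((2-t)/2)^2 < 3*t^2/4"
        proof -
          have "(2-t)^2 < t^2" using assms t2l by (intro power_strict_mono) auto
          moreover have "t^2 \<ge> 0" by simp
          ultimately have "(2-t)^2 < 3*t^2" by linarith
          then show ?thesis by (simp add: power_divide)
        qed
        ultimately show False by simp
      qed
    qed
  qed
qed

end
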